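(* Let $\mathcal{X}=(X,dX)$ be a directed space. On the set of traces of $\mathcal{X}$, define $f\leq g$ if and only if there exist traces $u,v$ with $g=u\star f\star v$. Then $\leq$ is a preorder. If moreover $\mathcal{X}$ is a pospace (with its increasing paths as dipaths), then $\leq$ is a partial order.
   Context: A directed space $\mathcal{X}=(X,dX)$ is a topological space $X$ with a set $dX$ of continuous paths $[0,1]\to X$ (dipaths) containing constant paths, closed under monotone reparametrization and under concatenation. A trace is the equivalence class of a dipath modulo monotone reparametrization, and concatenation $\star$ of (composable) traces is induced by concatenation of dipaths. A pospace is a Hausdorff space $X$ with a partial order $\leq_X$ that is closed in $X\times X$; it is regarded as a directed space whose dipaths are the continuous order-preserving maps $[0,1]\to X$ ($[0,1]$ with its usual order). *)

theory Defs
  imports "HOL-Analysis.Analysis"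
begin

text \<open>Paths are functions real => 'a; only their values on [0,1] are relevant.\<close>

definition dpath_cat :: "(real \<Rightarrow> 'a) \<Rightarrow> (real \<Rightarrow> 'a) \<Rightarrow> real \<Rightarrow> 'a" where
  "dpath_cat p q = (\<lambda>t. if t \<le> 1/2 then p (2 * t) else q (2 * t - 1))"

definition mono_reparam :: "(real \<Rightarrow> real) \<Rightarrow> bool" where
  "mono_reparam \<phi> \<longleftrightarrow> continuous_on {0..1} \<phi> \<and> \<phi> ` {0..1} \<subseteq> {0..1} \<and> mono_on {0..1} \<phi>"

definition is_path :: "'a topology \<Rightarrow> (real \<Rightarrow> 'a) \<Rightarrow> bool" where
  "is_path X p \<longleftrightarrow> continuous_map (top_of_set {0..1}) X p"

definition dspace :: "'a topology \<Rightarrow> (real \<Rightarrow> 'a) set \<Rightarrow> bool" where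
  "dspace X dX \<longleftrightarrow>
     (\<forall>p\<in>dX. is_path X p) \<and>
     (\<forall>x\<in>topspace X. (\<lambda>t. x) \<in> dX) \<and>
     (\<forall>p\<in>dX. \<forall>\<phi>. mono_reparam \<phi> \<longrightarrow> p \<circ> \<phi> \<in> dX) \<and>
     (\<forall>p\<in>dX. \<forall>q\<in>dX. p 1 = q 0 \<longrightarrow> dpath_cat p q \<in> dX)"

definition reparam_step :: "(real \<Rightarrow> 'a) \<Rightarrow> (real \<Rightarrow> 'a) \<Rightarrow> bool" where
  "reparam_step p q \<longleftrightarrow> (\<exists>\<phi>. mono_reparam \<phi> \<and> \<phi> ` {0..1} = {0..1} \<and>
                              (\<forall>t\<in>{0..1}. q t = p (\<phi> t)))"

definition trace_eq :: "(real \<Rightarrow> 'a) set \<Rightarrow> (real \<Rightarrow> 'a) \<Rightarrow> (real \<Rightarrow> 'a) \<Rightarrow> bool" where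
  "trace_eq dX = equivclp (\<lambda>p q. p \<in> dX \<and> q \<in> dX \<and> reparam_step p q)"

definition traces :: "(real \<Rightarrow> 'a) set \<Rightarrow> (real \<Rightarrow> 'a) set set" where
  "traces dX = dX // {(p, q). p \<in> dX \<and> q \<in> dX \<and> trace_eq dX p q}"

definition trace_src :: "(real \<Rightarrow> 'a) set \<Rightarrow> 'a" where
  "trace_src F = (SOME p. p \<in> F) 0"

definition trace_tgt :: "(real \<Rightarrow> 'a) set \<Rightarrow> 'a" where
  "trace_tgt F = (SOME p. p \<in> F) 1"

definition trace_cat :: "(real \<Rightarrow> 'a) set \<Rightarrow> (real \<Rightarrow> 'a) set \<Rightarrow> (real \<Rightarrow> 'a) set \<Rightarrow> (real \<Rightarrow> 'a) set" where
  "trace_cat dX F G = {r \<in> dX. \<exists>p\<in>F. \<exists>q\<in>G. p 1 = q 0 \<and> trace_eq dX r (dpath_cat p q)}"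

definition trace_le :: "(real \<Rightarrow> 'a) set \<Rightarrow> (real \<Rightarrow> 'a) set rel" where
  "trace_le dX = {(F, G). F \<in> traces dX \<and> G \<in> traces dX \<and>
      (\<exists>U\<in>traces dX. \<exists>V\<in>traces dX.
         trace_tgt U = trace_src F \<and> trace_tgt F = trace_src V \<and>
         G = trace_cat dX (trace_cat dX U F) V)}"

definition pospace :: "'a topology \<Rightarrow> ('a \<Rightarrow> 'a \<Rightarrow> bool) \<Rightarrow> bool" where
  "pospace X le \<longleftrightarrow> Hausdorff_space X \<and>
     (\<forall>x\<in>topspace X. le x x) \<and>
     (\<forall>x\<in>topspace X. \<forall>y\<in>topspace X. \<forall>z\<in>topspace X. le x y \<longrightarrow> le y z \<longrightarrow> le x z) \<and>
     (\<forall>x\<in>topspace X. \<forall>y\<in>topspace X. le x y \<longrightarrow> le y x \<longrightarrow> x = y) \<and>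
     closedin (prod_topology X X) {(x, y). x \<in> topspace X \<and> y \<in> topspace X \<and> le x y}"

definition pospace_dipaths :: "'a topology \<Rightarrow> ('a \<Rightarrow> 'a \<Rightarrow> bool) \<Rightarrow> (real \<Rightarrow> 'a) set" where
  "pospace_dipaths X le = {p. is_path X p \<and>
     (\<forall>s t. 0 \<le> s \<longrightarrow> s \<le> t \<longrightarrow> t \<le> 1 \<longrightarrow> le (p s) (p t))}"

end

theory Submission imports Defs begin

lemma mono_reparam_ends:
  assumes "mono_reparam \<phi>" "\<phi> ` {0..1} = {0..1}"
  shows "\<phi> 0 = 0" "\<phi> 1 = 1"
proof -
  from assms(2) obtain s where s: "s \<in> {0..1}" "\<phi> s = 0" by (metis atLeastAtMost_iff imageE order_refl zero_le_one)
  from assms(2) obtain s' where s': "s' \<in> {0..1}" "\<phi> s' = 1" by (metis atLeastAtMost_iff imageE order_refl zero_le_one)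
  have m: "mono_on {0..1} \<phi>" using assms(1) unfolding mono_reparam_def by auto
  have "\<phi> 0 \<le> \<phi> s" using m s(1) by (auto intro: mono_onD)
  moreover have "\<phi> 0 \<in> {0..1}" using assms(2) by auto
  ultimately show "\<phi> 0 = 0" using s by auto
  have "\<phi> s' \<le> \<phi> 1" using m s'(1) by (auto intro: mono_onD)
  moreover have "\<phi> 1 \<in> {0..1}" using assms(2) by auto
  ultimately show "\<phi> 1 = 1" using s' by auto
qed

lemma reparam_step_ends:
  assumes "reparam_step p q" shows "q 0 = p 0" "q 1 = p 1"
proof -
  obtain \<phi> where \<phi>: "mono_reparam \<phi>" "\<phi> ` {0..1} = {0..1}" "\<forall>t\<in>{0..1}. q t = p (\<phi> t)"
    using assms unfolding reparam_step_def by blast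
  have e: "\<phi> 0 = 0" "\<phi> 1 = 1" using mono_reparam_ends[OF \<phi>(1,2)] by auto
  show "q 0 = p 0" using \<phi>(3) e by (metis atLeastAtMost_iff order_refl zero_le_one)
  show "q 1 = p 1" using \<phi>(3) e by (metis atLeastAtMost_iff order_refl zero_le_one)
qed

lemma surj_reparam:
  fixes \<psi> :: "real \<Rightarrow> real"
  assumes "continuous_on {0..1} \<psi>" "\<psi> ` {0..1} \<subseteq> {0..1}" "\<psi> 0 = 0" "\<psi> 1 = (1::real)"
  shows "\<psi> ` {0..1} = {0..1}"
proof
  show "{0..1} \<subseteq> \<psi> ` {0..1}"
  proof
    fix y :: real assume "y \<in> {0..1}"
    then obtain x where "0 \<le> x" "x \<le> 1" "\<psi> x = y"
      using IVT'[of \<psi> 0 y 1] assms by auto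
    then show "y \<in> \<psi> ` {0..1}" by force
  qed
qed (use assms in auto)

lemma reparam_stepI:
  assumes "continuous_on {0..1} \<psi>" "\<psi> ` {0..1} \<subseteq> {0..1}" "mono_on {0..1} \<psi>"
    "\<psi> 0 = 0" "\<psi> 1 = (1::real)" "\<And>t. t \<in> {0..1} \<Longrightarrow> q t = p (\<psi> t)"
  shows "reparam_step p q"
  unfolding reparam_step_def mono_reparam_def
  using assms surj_reparam[OF assms(1,2,4,5)] by blast

lemma te_ends:
  assumes "trace_eq dX p q" shows "q 0 = p 0 \<and> q 1 = p 1"
  using assms unfolding trace_eq_def
  by (induction rule: equivclp_induct) (auto dest: reparam_step_ends)

lemma te_dX:
  assumes "trace_eq dX p q" "p \<in> dX" shows "q \<in> dX"
  using assms unfolding trace_eq_def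
  by (induction rule: equivclp_induct) auto

lemma te_step: "p \<in> dX \<Longrightarrow> q \<in> dX \<Longrightarrow> reparam_step p q \<Longrightarrow> trace_eq dX p q"
  unfolding trace_eq_def by auto

lemma te_sym: "trace_eq dX p q \<Longrightarrow> trace_eq dX q p"
  unfolding trace_eq_def by (rule equivclp_sym)

lemma te_trans: "trace_eq dX p q \<Longrightarrow> trace_eq dX q r \<Longrightarrow> trace_eq dX p r"
  unfolding trace_eq_def by (rule equivclp_trans)

lemma te_refl: "trace_eq dX p p"
  unfolding trace_eq_def by simp

lemma cat_ends: "dpath_cat p q 0 = p 0" "dpath_cat p q 1 = q 1"
  unfolding dpath_cat_def by auto

lemma dspace_cat: "dspace X dX \<Longrightarrow> p \<in> dX \<Longrightarrow> q \<in> dX \<Longrightarrow> p 1 = q 0 \<Longrightarrow> dpath_cat p q \<in> dX"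
  unfolding dspace_def by blast

lemma step_left:
  assumes "reparam_step p p'" "p 1 = q 0"
  shows "reparam_step (dpath_cat p q) (dpath_cat p' q)"
proof -
  obtain \<phi> where \<phi>: "mono_reparam \<phi>" "\<phi> ` {0..1} = {0..1}" "\<forall>t\<in>{0..1}. p' t = p (\<phi> t)"
    using assms unfolding reparam_step_def by auto
  have e: "\<phi> 0 = 0" "\<phi> 1 = 1" using mono_reparam_ends[OF \<phi>(1,2)] by auto
  have c: "continuous_on {0..1} \<phi>" and m: "mono_on {0..1} \<phi>" using \<phi>(1) unfolding mono_reparam_def by auto
  have img: "\<And>x. 0 \<le> x \<Longrightarrow> x \<le> 1 \<Longrightarrow> 0 \<le> \<phi> x \<and> \<phi> x \<le> 1"
    using \<phi>(2) by (metis atLeastAtMost_iff image_eqI)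
  define \<psi> where "\<psi> = (\<lambda>t::real. \<phi> (min 1 (2 * t)) / 2 + max 0 (t - 1/2))"
  show ?thesis
  proof (rule reparam_stepI[where \<psi> = \<psi>])
    have "continuous_on {0..1} (\<lambda>t::real. \<phi> (min 1 (2 * t)))"
      by (rule continuous_on_compose2[OF c]) (auto intro!: continuous_intros)
    then show "continuous_on {0..1} \<psi>" unfolding \<psi>_def by (intro continuous_intros) auto
    show "\<psi> ` {0..1} \<subseteq> {0..1}"
    proof (rule image_subsetI)
      fix t :: real assume t: "t \<in> {0..1}"
      have a: "0 \<le> \<phi> (min 1 (2 * t)) \<and> \<phi> (min 1 (2 * t)) \<le> 1" using t by (intro img) auto
      show "\<psi> t \<in> {0..1}"
      proof (cases "t \<le> 1/2")
        case True
        then show ?thesis using a unfolding \<psi>_def by simp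
      next
        case False
        then have "min 1 (2 * t) = 1" by simp
        then show ?thesis using e t False unfolding \<psi>_def by simp
      qed
    qed
    show "mono_on {0..1} \<psi>"
    proof (rule mono_onI)
      fix r s :: real assume rs: "r \<in> {0..1}" "s \<in> {0..1}" "r \<le> s"
      have "\<phi> (min 1 (2 * r)) \<le> \<phi> (min 1 (2 * s))" using rs by (intro mono_onD[OF m]) auto
      moreover have "max 0 (r - 1/2) \<le> max 0 (s - 1/2)" using rs by simp
      ultimately show "\<psi> r \<le> \<psi> s" unfolding \<psi>_def by simp
    qed
    show "\<psi> 0 = 0" "\<psi> 1 = 1" unfolding \<psi>_def using e by simp_all
    fix t :: real assume t: "t \<in> {0..1}"
    show "dpath_cat p' q t = dpath_cat p q (\<psi> t)"
    proof (cases "t \<le> 1/2")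
      case True
      have a: "0 \<le> \<phi> (2 * t) \<and> \<phi> (2 * t) \<le> 1" using t True by (intro img) auto
      have h: "\<psi> t = \<phi> (2 * t) / 2" using True unfolding \<psi>_def by simp
      have h2: "p' (2 * t) = p (\<phi> (2 * t))" using \<phi>(3) t True by simp
      show ?thesis using True a unfolding dpath_cat_def by (simp add: h h2)
    next
      case False
      have "\<psi> t = t" using False e unfolding \<psi>_def by simp
      then show ?thesis using False unfolding dpath_cat_def by simp
    qed
  qed
qed

lemma step_right:
  assumes "reparam_step q q'" "p 1 = q 0"
  shows "reparam_step (dpath_cat p q) (dpath_cat p q')"
proof -
  obtain \<phi> where \<phi>: "mono_reparam \<phi>" "\<phi> ` {0..1} = {0..1}" "\<forall>t\<in>{0..1}. q' t = q (\<phi> t)"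
    using assms unfolding reparam_step_def by auto
  have e: "\<phi> 0 = 0" "\<phi> 1 = 1" using mono_reparam_ends[OF \<phi>(1,2)] by auto
  have c: "continuous_on {0..1} \<phi>" and m: "mono_on {0..1} \<phi>" using \<phi>(1) unfolding mono_reparam_def by auto
  define \<psi> where "\<psi> = (\<lambda>t::real. min t (1/2) + \<phi> (max 0 (2 * t - 1)) / 2)"
  show ?thesis
  proof (rule reparam_stepI[where \<psi> = \<psi>])
    have "continuous_on {0..1} (\<lambda>t::real. \<phi> (max 0 (2 * t - 1)))"
      by (rule continuous_on_compose2[OF c]) (auto intro!: continuous_intros)
    then show "continuous_on {0..1} \<psi>" unfolding \<psi>_def by (auto intro!: continuous_intros)
    show "\<psi> ` {0..1} \<subseteq> {0..1}"
    proof
      fix y assume "y \<in> \<psi> ` {0..1}"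
      then obtain t where t: "t \<in> {0..1}" "y = \<psi> t" by auto
      have "\<phi> (max 0 (2 * t - 1)) \<in> {0..1}" using \<phi>(2) t(1) by auto
      moreover have "t \<le> 1/2 \<Longrightarrow> \<phi> (max 0 (2 * t - 1)) = 0" using e by auto
      ultimately show "y \<in> {0..1}" using t unfolding \<psi>_def by (auto simp: min_def)
    qed
    show "mono_on {0..1} \<psi>"
    proof (rule mono_onI)
      fix r s :: real assume rs: "r \<in> {0..1}" "s \<in> {0..1}" "r \<le> s"
      have "\<phi> (max 0 (2 * r - 1)) \<le> \<phi> (max 0 (2 * s - 1))" using rs by (intro mono_onD[OF m]) auto
      then show "\<psi> r \<le> \<psi> s" unfolding \<psi>_def using rs by (auto simp: min_def)
    qed
    show "\<psi> 0 = 0" "\<psi> 1 = 1" unfolding \<psi>_def using e by auto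
    fix t :: real assume t: "t \<in> {0..1}"
    show "dpath_cat p q' t = dpath_cat p q (\<psi> t)"
    proof (cases "t \<le> 1/2")
      case True
      then show ?thesis using e t unfolding \<psi>_def dpath_cat_def by auto
    next
      case False
      have "\<phi> (2 * t - 1) \<in> {0..1}" using \<phi>(2) t False by auto
      then show ?thesis using False t \<phi>(3) e assms(2) unfolding \<psi>_def dpath_cat_def by auto
    qed
  qed
qed


lemma te_left:
  assumes ds: "dspace X dX" and "trace_eq dX p p'" "p \<in> dX" "q \<in> dX" "p 1 = q 0"
  shows "trace_eq dX (dpath_cat p q) (dpath_cat p' q)"
proof -
  have "equivclp (\<lambda>p q. p \<in> dX \<and> q \<in> dX \<and> reparam_step p q) p p'"
    using assms(2) unfolding trace_eq_def .
  then have "p' \<in> dX \<and> p' 1 = q 0 \<and> trace_eq dX (dpath_cat p q) (dpath_cat p' q)"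
  proof (induction rule: equivclp_induct)
    case base
    then show ?case using assms by (simp add: te_refl)
  next
    case (step y z)
    from step.hyps(2) show ?case
    proof
      assume h: "z \<in> dX \<and> y \<in> dX \<and> reparam_step z y"
      have e: "y 1 = z 1" using reparam_step_ends(2)[of z y] h by simp
      have "trace_eq dX (dpath_cat z q) (dpath_cat y q)"
        using h step.IH e assms by (intro te_step step_left dspace_cat[OF ds]) auto
      then show ?thesis using step.IH h e te_trans te_sym by metis
    next
      assume h: "y \<in> dX \<and> z \<in> dX \<and> reparam_step y z"
      have e: "z 1 = y 1" using reparam_step_ends(2)[of y z] h by simp
      have "trace_eq dX (dpath_cat y q) (dpath_cat z q)"
        using h step.IH e assms by (intro te_step step_left dspace_cat[OF ds]) auto
      then show ?thesis using step.IH h e te_trans by metis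
    qed
  qed
  then show ?thesis by blast
qed

lemma te_right:
  assumes ds: "dspace X dX" and "trace_eq dX q q'" "p \<in> dX" "q \<in> dX" "p 1 = q 0"
  shows "trace_eq dX (dpath_cat p q) (dpath_cat p q')"
proof -
  have "equivclp (\<lambda>p q. p \<in> dX \<and> q \<in> dX \<and> reparam_step p q) q q'"
    using assms(2) unfolding trace_eq_def .
  then have "q' \<in> dX \<and> p 1 = q' 0 \<and> trace_eq dX (dpath_cat p q) (dpath_cat p q')"
  proof (induction rule: equivclp_induct)
    case base
    then show ?case using assms by (simp add: te_refl)
  next
    case (step y z)
    from step.hyps(2) show ?case
    proof
      assume h: "z \<in> dX \<and> y \<in> dX \<and> reparam_step z y"
      have e: "y 0 = z 0" using reparam_step_ends(1)[of z y] h by simp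
      have "trace_eq dX (dpath_cat p z) (dpath_cat p y)"
        using h step.IH e assms by (intro te_step step_right dspace_cat[OF ds]) auto
      then show ?thesis using step.IH h e te_trans te_sym by metis
    next
      assume h: "y \<in> dX \<and> z \<in> dX \<and> reparam_step y z"
      have e: "z 0 = y 0" using reparam_step_ends(1)[of y z] h by simp
      have "trace_eq dX (dpath_cat p y) (dpath_cat p z)"
        using h step.IH e assms by (intro te_step step_right dspace_cat[OF ds]) auto
      then show ?thesis using step.IH h e te_trans by metis
    qed
  qed
  then show ?thesis by blast
qed

lemma step_lid:
  assumes "\<forall>t\<in>{0..1}. c t = q 0"
  shows "reparam_step q (dpath_cat c q)"
proof (rule reparam_stepI[where \<psi> = "\<lambda>t. max 0 (2 * t - 1)"])
  show "continuous_on {0..1} (\<lambda>t::real. max 0 (2 * t - 1))" by (intro continuous_intros)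
  show "(\<lambda>t::real. max 0 (2 * t - 1)) ` {0..1} \<subseteq> {0..1}" by auto
  show "mono_on {0..1} (\<lambda>t::real. max 0 (2 * t - 1))" by (rule mono_onI) auto
  fix t :: real assume t: "t \<in> {0..1}"
  show "dpath_cat c q t = q (max 0 (2 * t - 1))"
  proof (cases "t \<le> 1/2")
    case True
    then have "c (2 * t) = q 0" using assms t by auto
    moreover have "max 0 (2 * t - 1) = 0" using True by simp
    ultimately show ?thesis using True unfolding dpath_cat_def by simp
  next
    case False
    then show ?thesis unfolding dpath_cat_def by (simp add: max_def)
  qed
qed simp_all

lemma step_rid:
  assumes "\<forall>t\<in>{0..1}. c t = p 1"
  shows "reparam_step p (dpath_cat p c)"
proof (rule reparam_stepI[where \<psi> = "\<lambda>t. min 1 (2 * t)"])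
  show "continuous_on {0..1} (\<lambda>t::real. min 1 (2 * t))" by (intro continuous_intros)
  show "(\<lambda>t::real. min 1 (2 * t)) ` {0..1} \<subseteq> {0..1}" by auto
  show "mono_on {0..1} (\<lambda>t::real. min 1 (2 * t))" by (rule mono_onI) auto
  fix t :: real assume t: "t \<in> {0..1}"
  show "dpath_cat p c t = p (min 1 (2 * t))"
  proof (cases "t \<le> 1/2")
    case True
    then have "min 1 (2 * t) = 2 * t" by simp
    then show ?thesis using True unfolding dpath_cat_def by simp
  next
    case False
    then have "c (2 * t - 1) = p 1" using assms t by auto
    then show ?thesis using False unfolding dpath_cat_def by (simp add: min_def)
  qed
qed simp_all

lemma step_assoc:
  "reparam_step (dpath_cat p (dpath_cat q r)) (dpath_cat (dpath_cat p q) r)"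
proof (rule reparam_stepI[where \<psi> = "\<lambda>t. min (2 * t) (min (t + 1/4) ((t + 1) / 2))"])
  show "continuous_on {0..1} (\<lambda>t::real. min (2 * t) (min (t + 1/4) ((t + 1) / 2)))"
    by (intro continuous_intros) auto
  show "(\<lambda>t::real. min (2 * t) (min (t + 1/4) ((t + 1) / 2))) ` {0..1} \<subseteq> {0..1}"
    by (auto simp: min_def)
  show "mono_on {0..1} (\<lambda>t::real. min (2 * t) (min (t + 1/4) ((t + 1) / 2)))"
    by (rule mono_onI) (auto simp: min_def)
  fix t :: real assume t: "t \<in> {0..1}"
  show "dpath_cat (dpath_cat p q) r t = dpath_cat p (dpath_cat q r) (min (2 * t) (min (t + 1/4) ((t + 1) / 2)))"
  proof (cases "t \<le> 1/4")
    case True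
    then have "min (2 * t) (min (t + 1/4) ((t + 1) / 2)) = 2 * t" by simp
    then show ?thesis using True unfolding dpath_cat_def by simp
  next
    case False
    show ?thesis
    proof (cases "t \<le> 1/2")
      case True
      then have "min (2 * t) (min (t + 1/4) ((t + 1) / 2)) = t + 1/4" using False by simp
      then show ?thesis using True False unfolding dpath_cat_def by (simp add: algebra_simps)
    next
      case F2: False
      then have "min (2 * t) (min (t + 1/4) ((t + 1) / 2)) = (t + 1) / 2" by simp
      moreover have "2 * (2 * ((t + 1) / 2) - 1) - 1 = 2 * t - 1" by (simp add: field_simps)
      ultimately show ?thesis using F2 unfolding dpath_cat_def by (simp only:) simp
    qed
  qed
qed simp_all


lemma te_assoc:
  assumes ds: "dspace X dX" and "p \<in> dX" "q \<in> dX" "r \<in> dX" "p 1 = q 0" "q 1 = r 0"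
  shows "trace_eq dX (dpath_cat p (dpath_cat q r)) (dpath_cat (dpath_cat p q) r)"
  using assms by (intro te_step step_assoc dspace_cat[OF ds]) (auto simp: cat_ends)

definition cls :: "(real \<Rightarrow> 'a) set \<Rightarrow> (real \<Rightarrow> 'a) \<Rightarrow> (real \<Rightarrow> 'a) set" where
  "cls dX p = {q. q \<in> dX \<and> trace_eq dX p q}"

lemma traces_iff: "F \<in> traces dX \<longleftrightarrow> (\<exists>p\<in>dX. F = cls dX p)"
  unfolding traces_def quotient_def cls_def by auto

lemma cls_self: "p \<in> dX \<Longrightarrow> p \<in> cls dX p"
  unfolding cls_def by (simp add: te_refl)

lemma cls_eq_iff: "p \<in> dX \<Longrightarrow> q \<in> dX \<Longrightarrow> cls dX p = cls dX q \<longleftrightarrow> trace_eq dX p q"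
  unfolding cls_def using te_refl te_sym te_trans by blast

lemma cls_src: assumes "p \<in> dX" shows "trace_src (cls dX p) = p 0"
proof -
  have "(SOME r. r \<in> cls dX p) \<in> cls dX p" using cls_self[OF assms] by (rule someI[of "\<lambda>r. r \<in> cls dX p" p])
  then show ?thesis unfolding trace_src_def cls_def using te_ends by fastforce
qed

lemma cls_tgt: assumes "p \<in> dX" shows "trace_tgt (cls dX p) = p 1"
proof -
  have "(SOME r. r \<in> cls dX p) \<in> cls dX p" using cls_self[OF assms] by (rule someI[of "\<lambda>r. r \<in> cls dX p" p])
  then show ?thesis unfolding trace_tgt_def cls_def using te_ends by fastforce
qed

lemma cat_cls:
  assumes ds: "dspace X dX" and p: "p \<in> dX" and q: "q \<in> dX" and e: "p 1 = q 0"
  shows "trace_cat dX (cls dX p) (cls dX q) = cls dX (dpath_cat p q)"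
proof
  show "trace_cat dX (cls dX p) (cls dX q) \<subseteq> cls dX (dpath_cat p q)"
  proof
    fix r assume "r \<in> trace_cat dX (cls dX p) (cls dX q)"
    then obtain p' q' where r: "r \<in> dX" and p': "p' \<in> dX" "trace_eq dX p p'"
      and q': "q' \<in> dX" "trace_eq dX q q'" and e': "p' 1 = q' 0"
      and rr: "trace_eq dX r (dpath_cat p' q')"
      unfolding trace_cat_def cls_def by blast
    have "trace_eq dX (dpath_cat p q) (dpath_cat p' q)"
      using te_left[OF ds p'(2) p q e] .
    moreover have "p' 1 = q 0" using te_ends[OF p'(2)] e by simp
    then have "trace_eq dX (dpath_cat p' q) (dpath_cat p' q')"
      using te_right[OF ds q'(2) p'(1) q] by simp
    ultimately have "trace_eq dX (dpath_cat p q) r" using rr te_trans te_sym by metis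
    then show "r \<in> cls dX (dpath_cat p q)" using r unfolding cls_def by simp
  qed
  show "cls dX (dpath_cat p q) \<subseteq> trace_cat dX (cls dX p) (cls dX q)"
    unfolding trace_cat_def using cls_self[OF p] cls_self[OF q] e
    by (auto simp: cls_def intro: te_sym)
qed

lemma path_pts: assumes "dspace X dX" "p \<in> dX" "t \<in> {0..1}" shows "p t \<in> topspace X"
proof -
  have "continuous_map (top_of_set {0..1}) X p" using assms unfolding dspace_def is_path_def by blast
  then have "p \<in> topspace (top_of_set {0..1}) \<rightarrow> topspace X" unfolding continuous_map_def by blast
  then show ?thesis using assms(3) by auto
qed

lemma le_intro:
  assumes ds: "dspace X dX" and "f \<in> dX" "u \<in> dX" "v \<in> dX" "u 1 = f 0" "f 1 = v 0"
  shows "(cls dX f, cls dX (dpath_cat (dpath_cat u f) v)) \<in> trace_le dX"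
proof -
  have uf: "dpath_cat u f \<in> dX" by (rule dspace_cat[OF ds]) (use assms in \<open>auto\<close>)
  have ufv: "dpath_cat (dpath_cat u f) v \<in> dX" by (rule dspace_cat[OF ds]) (use assms uf in \<open>auto simp: cat_ends\<close>)
  have T: "cls dX f \<in> traces dX" "cls dX u \<in> traces dX" "cls dX v \<in> traces dX"
    "cls dX (dpath_cat (dpath_cat u f) v) \<in> traces dX"
    using assms ufv by (auto simp: traces_iff)
  have G: "cls dX (dpath_cat (dpath_cat u f) v) = trace_cat dX (trace_cat dX (cls dX u) (cls dX f)) (cls dX v)"
    using assms uf by (simp add: cat_cls[OF ds] cat_ends)
  have S: "trace_tgt (cls dX u) = trace_src (cls dX f)" "trace_tgt (cls dX f) = trace_src (cls dX v)"
    using assms by (simp_all add: cls_src cls_tgt)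
  show ?thesis unfolding trace_le_def
    using T G S by blast
qed

lemma le_elim:
  assumes ds: "dspace X dX" and le: "(F, G) \<in> trace_le dX" and f: "f \<in> dX" "F = cls dX f"
  shows "\<exists>u\<in>dX. \<exists>v\<in>dX. u 1 = f 0 \<and> f 1 = v 0 \<and> G = cls dX (dpath_cat (dpath_cat u f) v)"
proof -
  obtain U V where U: "U \<in> traces dX" and V: "V \<in> traces dX" and
    s: "trace_tgt U = trace_src F" "trace_tgt F = trace_src V" and
    G: "G = trace_cat dX (trace_cat dX U F) V"
    using le unfolding trace_le_def by blast
  obtain u where u: "u \<in> dX" "U = cls dX u" using U traces_iff by blast
  obtain v where v: "v \<in> dX" "V = cls dX v" using V traces_iff by blast
  have e: "u 1 = f 0" "f 1 = v 0" using s u v f by (auto simp: cls_src cls_tgt)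
  have uf: "dpath_cat u f \<in> dX" by (rule dspace_cat[OF ds]) (use u f e in \<open>auto\<close>)
  have "G = cls dX (dpath_cat (dpath_cat u f) v)"
    using G u v f e uf by (simp add: cat_cls[OF ds] cat_ends)
  then show ?thesis using u v e by blast
qed

lemma part1:
  assumes ds: "dspace X dX" shows "preorder_on (traces dX) (trace_le dX)"
  unfolding preorder_on_def
proof (intro conjI)
  show "trace_le dX \<subseteq> traces dX \<times> traces dX" unfolding trace_le_def by auto
  show "refl_on (traces dX) (trace_le dX)"
    unfolding refl_on_def
  proof
    fix F assume "F \<in> traces dX"
    then obtain f where f: "f \<in> dX" "F = cls dX f" using traces_iff by blast
    define c0 where "c0 = (\<lambda>t::real. f 0)"
    define c1 where "c1 = (\<lambda>t::real. f 1)"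
    have c: "c0 \<in> dX" "c1 \<in> dX" using ds path_pts[OF ds f(1)] unfolding c0_def c1_def dspace_def by auto
    have cf: "dpath_cat c0 f \<in> dX" by (rule dspace_cat[OF ds]) (use c f in \<open>auto simp: c0_def\<close>)
    have fc: "dpath_cat f c1 \<in> dX" by (rule dspace_cat[OF ds]) (use c f in \<open>auto simp: c1_def\<close>)
    have 1: "trace_eq dX f (dpath_cat c0 f)" using f cf by (intro te_step step_lid) (auto simp: c0_def)
    have 2: "trace_eq dX f (dpath_cat f c1)" using f fc by (intro te_step step_rid) (auto simp: c1_def)
    have 3: "trace_eq dX (dpath_cat f c1) (dpath_cat (dpath_cat c0 f) c1)"
      using te_left[OF ds 1 f(1) c(2)] by (simp add: c1_def)
    have "trace_eq dX f (dpath_cat (dpath_cat c0 f) c1)" using 2 3 te_trans by blast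
    moreover have "dpath_cat (dpath_cat c0 f) c1 \<in> dX" by (rule dspace_cat[OF ds]) (use cf c in \<open>auto simp: c1_def cat_ends\<close>)
    ultimately have "cls dX f = cls dX (dpath_cat (dpath_cat c0 f) c1)" using f cls_eq_iff by blast
    moreover have "(cls dX f, cls dX (dpath_cat (dpath_cat c0 f) c1)) \<in> trace_le dX"
      using f c by (intro le_intro[OF ds]) (auto simp: c0_def c1_def)
    ultimately show "(F, F) \<in> trace_le dX" using f by simp
  qed
  show "trans (trace_le dX)"
  proof (rule transI)
    fix F G H assume FG: "(F, G) \<in> trace_le dX" and GH: "(G, H) \<in> trace_le dX"
    then have "F \<in> traces dX" unfolding trace_le_def by auto
    then obtain f where f: "f \<in> dX" "F = cls dX f" using traces_iff by blast
    obtain u v where uv: "u \<in> dX" "v \<in> dX" "u 1 = f 0" "f 1 = v 0"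
      and G: "G = cls dX (dpath_cat (dpath_cat u f) v)" using le_elim[OF ds FG f] by blast
    have uf: "dpath_cat u f \<in> dX" by (rule dspace_cat[OF ds]) (use uv f in \<open>auto\<close>)
    define g where "g = dpath_cat (dpath_cat u f) v"
    have g: "g \<in> dX" unfolding g_def by (rule dspace_cat[OF ds]) (use uf uv in \<open>auto simp: cat_ends\<close>)
    obtain u' v' where uv': "u' \<in> dX" "v' \<in> dX" "u' 1 = g 0" "g 1 = v' 0"
      and H: "H = cls dX (dpath_cat (dpath_cat u' g) v')" using le_elim[OF ds GH g] G g_def by blast
    have ge: "g 0 = u 0" "g 1 = v 1" unfolding g_def by (simp_all add: cat_ends)
    have u'u: "dpath_cat u' u \<in> dX" by (rule dspace_cat[OF ds]) (use uv uv' ge in \<open>auto\<close>)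
    have vv': "dpath_cat v v' \<in> dX" by (rule dspace_cat[OF ds]) (use uv uv' ge in \<open>auto\<close>)
    have u'uf: "dpath_cat (dpath_cat u' u) f \<in> dX" by (rule dspace_cat[OF ds]) (use u'u f uv in \<open>auto simp: cat_ends\<close>)
    have A: "trace_eq dX (dpath_cat u' g) (dpath_cat (dpath_cat u' (dpath_cat u f)) v)"
      unfolding g_def using uv' uf uv ge by (intro te_assoc[OF ds]) (auto simp: cat_ends)
    have B0: "trace_eq dX (dpath_cat u' (dpath_cat u f)) (dpath_cat (dpath_cat u' u) f)"
      using uv' uv f ge by (intro te_assoc[OF ds]) auto
    have u'uf2: "dpath_cat u' (dpath_cat u f) \<in> dX" by (rule dspace_cat[OF ds]) (use uv' uf ge in \<open>auto simp: cat_ends\<close>)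
    have B: "trace_eq dX (dpath_cat (dpath_cat u' (dpath_cat u f)) v) (dpath_cat (dpath_cat (dpath_cat u' u) f) v)"
      using te_left[OF ds B0 u'uf2 uv(2)] uv by (simp add: cat_ends)
    have AB: "trace_eq dX (dpath_cat u' g) (dpath_cat (dpath_cat (dpath_cat u' u) f) v)"
      using A B te_trans by blast
    have u'g: "dpath_cat u' g \<in> dX" by (rule dspace_cat[OF ds]) (use uv' g in \<open>auto\<close>)
    have C: "trace_eq dX (dpath_cat (dpath_cat u' g) v') (dpath_cat (dpath_cat (dpath_cat (dpath_cat u' u) f) v) v')"
      using te_left[OF ds AB u'g uv'(2)] uv' by (simp add: cat_ends)
    have D: "trace_eq dX (dpath_cat (dpath_cat (dpath_cat u' u) f) (dpath_cat v v')) (dpath_cat (dpath_cat (dpath_cat (dpath_cat u' u) f) v) v')"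
      using u'uf uv uv' ge by (intro te_assoc[OF ds]) (auto simp: cat_ends)
    have CD: "trace_eq dX (dpath_cat (dpath_cat u' g) v') (dpath_cat (dpath_cat (dpath_cat u' u) f) (dpath_cat v v'))"
      using C D te_trans te_sym by blast
    have m1: "dpath_cat (dpath_cat u' g) v' \<in> dX" by (rule dspace_cat[OF ds]) (use u'g uv' in \<open>auto simp: cat_ends\<close>)
    have m2: "dpath_cat (dpath_cat (dpath_cat u' u) f) (dpath_cat v v') \<in> dX"
      by (rule dspace_cat[OF ds]) (use u'uf vv' uv in \<open>auto simp: cat_ends\<close>)
    have "H = cls dX (dpath_cat (dpath_cat (dpath_cat u' u) f) (dpath_cat v v'))"
      using H CD m1 m2 cls_eq_iff by blast
    moreover have "(cls dX f, cls dX (dpath_cat (dpath_cat (dpath_cat u' u) f) (dpath_cat v v'))) \<in> trace_le dX"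
      using f u'u vv' uv uv' ge by (intro le_intro[OF ds]) (auto simp: cat_ends)
    ultimately show "(F, H) \<in> trace_le dX" using f by simp
  qed
qed


lemma cat_is_path:
  assumes p: "is_path X p" and q: "is_path X q" and e: "p 1 = q 0"
  shows "is_path X (dpath_cat p q)"
proof -
  let ?T01 = "top_of_set {0..1::real}"
  have g1: "continuous_map ?T01 X p" and g2: "continuous_map ?T01 X q"
    using p q unfolding is_path_def by auto
  have eq: "dpath_cat p q = (\<lambda>x. if x \<le> 1/2 then (p \<circ> (\<lambda>t. 2 * t)) x else (q \<circ> (\<lambda>t. 2 * t -1)) x)"
    unfolding dpath_cat_def by auto
  have "continuous_map (subtopology euclideanreal {0..1}) X
        (\<lambda>x. if x \<le> 1/2 then (p \<circ> (\<lambda>t. 2 * t)) x else (q \<circ> (\<lambda>t. 2 * t -1)) x)"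
  proof (intro continuous_map_cases_le continuous_map_compose, force, force)
    show "continuous_map (subtopology ?T01 {x \<in> topspace ?T01. x \<le> 1/2}) ?T01 ((*) 2)"
      by (auto simp: continuous_map_in_subtopology continuous_map_from_subtopology)
    have "continuous_map
           (subtopology (top_of_set {0..1}) {x. 0 \<le> x \<and> x \<le> 1 \<and> 1 \<le> x * 2})
           euclideanreal (\<lambda>t. 2 * t - 1)"
      by (intro continuous_intros) (force intro: continuous_map_from_subtopology)
    then show "continuous_map (subtopology ?T01 {x \<in> topspace ?T01. 1/2 \<le> x}) ?T01 (\<lambda>t. 2 * t - 1)"
      by (force simp: continuous_map_in_subtopology)
    show "(p \<circ> (*) 2) x = (q \<circ> (\<lambda>t. 2 * t - 1)) x" if "x \<in> topspace ?T01" "x = 1/2" for x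
    proof -
      have "2 * x = 1" using that by simp
      then show ?thesis using e by simp
    qed
  qed (use g1 g2 in auto)
  then show ?thesis unfolding is_path_def eq .
qed

lemma pospace_pts: "is_path X p \<Longrightarrow> t \<in> {0..1} \<Longrightarrow> p t \<in> topspace X"
  unfolding is_path_def continuous_map_def by auto

lemma pos_dspace:
  assumes P: "pospace X le" shows "dspace X (pospace_dipaths X le)"
  unfolding dspace_def
proof (intro conjI ballI allI impI)
  have refl: "\<And>x. x \<in> topspace X \<Longrightarrow> le x x" using P unfolding pospace_def by blast
  have tr: "\<And>x y z. x \<in> topspace X \<Longrightarrow> y \<in> topspace X \<Longrightarrow> z \<in> topspace X \<Longrightarrow> le x y \<Longrightarrow> le y z \<Longrightarrow> le x z"
    using P unfolding pospace_def by blast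
  show "is_path X p" if "p \<in> pospace_dipaths X le" for p using that unfolding pospace_dipaths_def by blast
  show "(\<lambda>t. x) \<in> pospace_dipaths X le" if "x \<in> topspace X" for x
    using that refl unfolding pospace_dipaths_def is_path_def by auto
  show "p \<circ> \<phi> \<in> pospace_dipaths X le" if "p \<in> pospace_dipaths X le" "mono_reparam \<phi>" for p \<phi>
  proof -
    have p: "continuous_map (top_of_set {0..1}) X p" "\<And>s t. 0 \<le> s \<Longrightarrow> s \<le> t \<Longrightarrow> t \<le> 1 \<Longrightarrow> le (p s) (p t)"
      using that(1) unfolding pospace_dipaths_def is_path_def by auto
    have \<phi>: "continuous_on {0..1} \<phi>" "\<phi> ` {0..1} \<subseteq> {0..1}" "mono_on {0..1} \<phi>"
      using that(2) unfolding mono_reparam_def by auto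
    have "continuous_map (top_of_set {0..1}) (top_of_set {0..1}) \<phi>"
      using \<phi> by (auto simp: continuous_map_in_subtopology)
    then have "continuous_map (top_of_set {0..1}) X (p \<circ> \<phi>)"
      using p(1) by (rule continuous_map_compose)
    moreover have "le ((p \<circ> \<phi>) s) ((p \<circ> \<phi>) t)" if "0 \<le> s" "s \<le> t" "t \<le> 1" for s t
    proof -
      have "\<phi> s \<le> \<phi> t" using that by (intro mono_onD[OF \<phi>(3)]) auto
      moreover have "\<phi> s \<in> {0..1}" "\<phi> t \<in> {0..1}" using that \<phi>(2) by (auto simp: image_subset_iff)
      ultimately show ?thesis using p(2) by auto
    qed
    ultimately show ?thesis unfolding pospace_dipaths_def is_path_def by auto
  qed
  show "dpath_cat p q \<in> pospace_dipaths X le"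
    if "p \<in> pospace_dipaths X le" "q \<in> pospace_dipaths X le" "p 1 = q 0" for p q
  proof -
    have p: "is_path X p" "\<And>s t. 0 \<le> s \<Longrightarrow> s \<le> t \<Longrightarrow> t \<le> 1 \<Longrightarrow> le (p s) (p t)"
      using that(1) unfolding pospace_dipaths_def by auto
    have q: "is_path X q" "\<And>s t. 0 \<le> s \<Longrightarrow> s \<le> t \<Longrightarrow> t \<le> 1 \<Longrightarrow> le (q s) (q t)"
      using that(2) unfolding pospace_dipaths_def by auto
    have e: "p 1 = q 0" using that(3) .
    have "le (dpath_cat p q s) (dpath_cat p q t)" if st: "0 \<le> s" "s \<le> t" "t \<le> 1" for s t
    proof (cases "t \<le> 1/2")
      case True
      then show ?thesis using st p(2)[of "2 * s" "2 * t"] unfolding dpath_cat_def by auto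
    next
      case False
      show ?thesis
      proof (cases "s \<le> 1/2")
        case True
        have a: "le (p (2 * s)) (p 1)" using p(2)[of "2 * s" 1] st True by auto
        have b: "le (q 0) (q (2 * t - 1))" using q(2)[of 0 "2 * t - 1"] st False by auto
        have pts: "p (2 * s) \<in> topspace X" "p 1 \<in> topspace X" "q (2 * t - 1) \<in> topspace X"
          using pospace_pts[OF p(1)] pospace_pts[OF q(1)] st True False by auto
        have "le (p (2 * s)) (q (2 * t - 1))" using tr[OF pts a] b e by metis
        then show ?thesis using True False unfolding dpath_cat_def by simp
      next
        case F2: False
        then show ?thesis using st False q(2)[of "2 * s - 1" "2 * t - 1"] unfolding dpath_cat_def by auto
      qed
    qed
    moreover have "is_path X (dpath_cat p q)" using cat_is_path p(1) q(1) that(3) by blast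
    ultimately show ?thesis unfolding pospace_dipaths_def by auto
  qed
qed

lemma part2:
  assumes P: "pospace X le"
  shows "partial_order_on (traces (pospace_dipaths X le)) (trace_le (pospace_dipaths X le))"
proof -
  define dX where "dX = pospace_dipaths X le"
  have ds: "dspace X dX" unfolding dX_def using pos_dspace[OF P] .
  have anti: "\<And>x y. x \<in> topspace X \<Longrightarrow> y \<in> topspace X \<Longrightarrow> le x y \<Longrightarrow> le y x \<Longrightarrow> x = y"
    using P unfolding pospace_def by blast
  have mon: "\<And>p s t. p \<in> dX \<Longrightarrow> 0 \<le> s \<Longrightarrow> s \<le> t \<Longrightarrow> t \<le> 1 \<Longrightarrow> le (p s) (p t)"
    unfolding dX_def pospace_dipaths_def by blast
  have pts: "\<And>p t. p \<in> dX \<Longrightarrow> 0 \<le> t \<Longrightarrow> t \<le> 1 \<Longrightarrow> p t \<in> topspace X"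
    using path_pts[OF ds] by auto
  have "antisym (trace_le dX)"
  proof (rule antisymI)
    fix F G assume FG: "(F, G) \<in> trace_le dX" and GF: "(G, F) \<in> trace_le dX"
    then have "F \<in> traces dX" unfolding trace_le_def by auto
    then obtain f where f: "f \<in> dX" "F = cls dX f" using traces_iff by blast
    obtain u v where uv: "u \<in> dX" "v \<in> dX" "u 1 = f 0" "f 1 = v 0"
      and G: "G = cls dX (dpath_cat (dpath_cat u f) v)" using le_elim[OF ds FG f] by blast
    have uf: "dpath_cat u f \<in> dX" by (rule dspace_cat[OF ds]) (use uv f in auto)
    define g where "g = dpath_cat (dpath_cat u f) v"
    have g: "g \<in> dX" unfolding g_def by (rule dspace_cat[OF ds]) (use uf uv in \<open>auto simp: cat_ends\<close>)
    obtain u' v' where uv': "u' \<in> dX" "v' \<in> dX" "u' 1 = g 0" "g 1 = v' 0"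
      and F: "F = cls dX (dpath_cat (dpath_cat u' g) v')" using le_elim[OF ds GF g] G g_def by blast
    have ge: "g 0 = u 0" "g 1 = v 1" unfolding g_def by (simp_all add: cat_ends)
    have u'g: "dpath_cat u' g \<in> dX" by (rule dspace_cat[OF ds]) (use uv' g in auto)
    have m1: "dpath_cat (dpath_cat u' g) v' \<in> dX" by (rule dspace_cat[OF ds]) (use u'g uv' in \<open>auto simp: cat_ends\<close>)
    have "trace_eq dX f (dpath_cat (dpath_cat u' g) v')" using F f m1 cls_eq_iff by blast
    from te_ends[OF this] have fe: "u' 0 = f 0" "v' 1 = f 1" by (simp_all add: cat_ends)
    have "le (f 0) (u 0)" using mon[OF uv'(1), of 0 1] fe uv' ge by simp
    moreover have "le (u 0) (f 0)" using mon[OF uv(1), of 0 1] uv by simp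
    ultimately have u0: "u 0 = f 0" using anti pts uv f by (metis order_refl zero_le_one)
    have uc: "\<forall>t\<in>{0..1}. u t = f 0"
    proof
      fix t :: real assume t: "t \<in> {0..1}"
      have "le (u 0) (u t)" "le (u t) (u 1)" using mon[OF uv(1)] t by auto
      moreover have "u t \<in> topspace X" "f 0 \<in> topspace X" using pts uv(1) f(1) t by auto
      ultimately show "u t = f 0" using anti u0 uv(3) by metis
    qed
    have "le (v 1) (f 1)" using mon[OF uv'(2), of 0 1] fe uv' ge by simp
    moreover have "le (f 1) (v 1)" using mon[OF uv(2), of 0 1] uv by simp
    ultimately have v1: "v 1 = f 1" using anti pts uv f by (metis order_refl zero_le_one)
    have vc: "\<forall>t\<in>{0..1}. v t = f 1"
    proof
      fix t :: real assume t: "t \<in> {0..1}"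
      have "le (v 0) (v t)" "le (v t) (v 1)" using mon[OF uv(2)] t by auto
      moreover have "v t \<in> topspace X" "f 1 \<in> topspace X" using pts uv(2) f(1) t by auto
      ultimately show "v t = f 1" using anti v1 uv(4) by metis
    qed
    have fv: "dpath_cat f v \<in> dX" by (rule dspace_cat[OF ds]) (use uv f in auto)
    have 1: "trace_eq dX f (dpath_cat u f)" using f uf uc by (intro te_step step_lid) auto
    have 2: "trace_eq dX (dpath_cat f v) g"
      unfolding g_def using te_left[OF ds 1 f(1) uv(2)] uv by simp
    have 3: "trace_eq dX f (dpath_cat f v)" using f fv vc by (intro te_step step_rid) auto
    have "trace_eq dX f g" using 2 3 te_trans by blast
    then show "F = G" using f G g g_def cls_eq_iff by blast
  qed
  then show ?thesis using part1[OF ds] unfolding partial_order_on_def dX_def by blast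
qed

theorem lemma5p1:
  shows "(\<forall>(X :: 'a topology) dX. dspace X dX \<longrightarrow> preorder_on (traces dX) (trace_le dX))
       \<and> (\<forall>(X :: 'a topology) le. pospace X le \<longrightarrow>
            partial_order_on (traces (pospace_dipaths X le)) (trace_le (pospace_dipaths X le)))"
  using part1 part2 by blast

end
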